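(* Let $G$ be a graph with a single vertex and a single face cellularly embedded in a closed oriented surface $S$ of genus $g\ge2$, let $\omega,\eta$ be the co-boundaries defined in the context, and let $\alpha$ be a potential from which $\omega$ derives. Then for every closed walk $c$ in $\widetilde G$, \[A(c)=\sum_{e=xy\in c}\frac{\alpha(x)+\alpha(y)}{2}\,\eta(p(e)),\] where the sum runs over the successive arcs $e$ of $c$, with $x$ and $y$ the tail and head of $e$.
   Context: $G$ has one vertex and $2g$ loop edges; $\overset{\leftrightarrow}{L}$ is its set of arcs (two opposite arcs $e,\bar e$ per edge). $p:\widetilde S\to S$ is the universal covering and $\widetilde G=p^{-1}(G)$, whose faces tile the plane $\widetilde S$; $\widetilde V=p^{-1}(\text{vertex})$. A co-boundary is a map $\omega:\overset{\leftrightarrow}{L}\to\mathbb R$ with $\omega(\bar e)=-\omega(e)$. A co-boundary $\omega$ derives from a potential $\alpha:\widetilde V\to\mathbb R$ if $\omega(p(v_1v_2))=\alpha(v_2)-\alpha(v_1)$ for every arc $v_1v_2$ of $\widetilde G$. Fix a face $D$ of $\widetilde G$ with counterclockwise boundary arcs $(e_1,\dots,e_{4g})$ (identified with their projections); there exist indices $1\le i<j<k<l\le 4g$ with $e_k=\bar e_i$ and $e_l=\bar e_j$. Set $\omega(e_i)=-\omega(e_k)=1$ and $\omega=0$ on all other arcs, and $\eta(e_j)=-\eta(e_l)=1$ and $\eta=0$ on all other arcs. For a closed walk $c$ in $\widetilde G$, $A(c)=\sum_f\mathrm{wind}(c,f)$, summing over faces $f$ of $\widetilde G$ the winding number of $c$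 around an interior point of $f$ (signed area). *)

theory Defs
  imports Main "HOL.Real"
begin

text \<open>Arcs of the one-vertex graph G with 2g loop edges are the
nonzero integers a with |a| \<le> 2g; the reverse of arc a is -a.
The single face is given by its counterclockwise boundary word r (0-indexed).\<close>

definition arcs :: "nat \<Rightarrow> int set" where
  "arcs g = {a. a \<noteq> 0 \<and> \<bar>a\<bar> \<le> int (2 * g)}"

text \<open>Gluing the 4g-gon along r: side m runs from corner m to corner (m+1) mod n;
if r!k is the reverse of r!m, corner m is glued to corner (k+1) mod n.\<close>
definition corner_rel :: "int list \<Rightarrow> (nat \<times> nat) set" where
  "corner_rel r = {(m, Suc k mod length r) | m k.
      m < length r \<and> k < length r \<and> r ! k = - (r ! m)}"

definition one_vertex_one_face :: "nat \<Rightarrow> int list \<Rightarrow> bool" where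
  "one_vertex_one_face g r \<longleftrightarrow>
     length r = 4 * g \<and> distinct r \<and> set r = arcs g \<and>
     (\<forall>m < length r. (0, m) \<in> (corner_rel r \<union> (corner_rel r)\<inverse>)\<^sup>*)"

text \<open>Vertices of the universal cover = elements of the fundamental group
< arcs | a(-a) = 1, r = 1 >, represented as classes of words.\<close>
definition word_step :: "nat \<Rightarrow> int list \<Rightarrow> (int list \<times> int list) set" where
  "word_step g r =
     {(xs @ [a, - a] @ ys, xs @ ys) | xs ys a. xs \<in> lists (arcs g) \<and> ys \<in> lists (arcs g) \<and> a \<in> arcs g}
   \<union> {(xs @ r @ ys, xs @ ys) | xs ys. xs \<in> lists (arcs g) \<and> ys \<in> lists (arcs g)}"

definition word_eq :: "nat \<Rightarrow> int list \<Rightarrow> (int list \<times> int list) set" where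
  "word_eq g r = (word_step g r \<union> (word_step g r)\<inverse>)\<^sup>*"

definition vtx :: "nat \<Rightarrow> int list \<Rightarrow> int list \<Rightarrow> int list set" where
  "vtx g r w = word_eq g r `` {w}"

definition cover_vertices :: "nat \<Rightarrow> int list \<Rightarrow> int list set set" where
  "cover_vertices g r = vtx g r ` lists (arcs g)"

definition inv_word :: "int list \<Rightarrow> int list" where
  "inv_word w = rev (map uminus w)"

text \<open>omega derives from the potential alpha: omega(p(v1 v2)) = alpha v2 - alpha v1.
The arc of the cover from vertex [w] labelled a goes to [w @ [a]].\<close>
definition derives_from :: "nat \<Rightarrow> int list \<Rightarrow> (int \<Rightarrow> real) \<Rightarrow> (int list set \<Rightarrow> real) \<Rightarrow> bool" where
  "derives_from g r \<omega> \<alpha> \<longleftrightarrow>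
     (\<forall>w \<in> lists (arcs g). \<forall>a \<in> arcs g. \<omega> a = \<alpha> (vtx g r (w @ [a])) - \<alpha> (vtx g r w))"

definition cob :: "int list \<Rightarrow> nat \<Rightarrow> nat \<Rightarrow> int \<Rightarrow> real" where
  "cob r i k a = (if a = r ! i then 1 else if a = r ! k then -1 else 0)"

text \<open>A walk in the cover: starts at vertex [w0] and follows the arc labels es.\<close>
definition traversals :: "nat \<Rightarrow> int list \<Rightarrow> int list \<Rightarrow> int list \<Rightarrow> int list set \<Rightarrow> int \<Rightarrow> nat" where
  "traversals g r w0 es v a =
     card {m. m < length es \<and> vtx g r (w0 @ take m es) = v \<and> es ! m = a}"

text \<open>Faces of the cover are indexed by their base vertex h: the face whose
counterclockwise boundary is h, h r_0, h r_0 r_1, ... . The face to the left of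
the arc ([w], a) is the one where a occurs at its position m in r.\<close>
definition left_face :: "nat \<Rightarrow> int list \<Rightarrow> int list \<Rightarrow> int \<Rightarrow> int list set" where
  "left_face g r w a = vtx g r (w @ inv_word (take (THE m. m < length r \<and> r ! m = a) r))"

text \<open>F is a finitely supported 2-chain on the faces whose boundary is the walk
(as an oriented 1-chain); F f is then the winding number of the walk around f.\<close>
definition fills :: "nat \<Rightarrow> int list \<Rightarrow> int list \<Rightarrow> int list \<Rightarrow> (int list set \<Rightarrow> int) \<Rightarrow> bool" where
  "fills g r w0 es F \<longleftrightarrow>
     (\<forall>v. v \<notin> cover_vertices g r \<longrightarrow> F v = 0) \<and> finite {v. F v \<noteq> 0} \<and>
     (\<forall>w \<in> lists (arcs g). \<forall>a \<in> arcs g.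
        int (traversals g r w0 es (vtx g r w) a) - int (traversals g r w0 es (vtx g r (w @ [a])) (- a))
        = F (left_face g r w a) - F (left_face g r (w @ [a]) (- a)))"

text \<open>Signed area: sum over faces of the winding numbers.\<close>
definition area :: "nat \<Rightarrow> int list \<Rightarrow> int list \<Rightarrow> int list \<Rightarrow> real" where
  "area g r w0 es = (THE x. \<exists>F. fills g r w0 es F \<and> x = (\<Sum>v \<in> {v. F v \<noteq> 0}. real_of_int (F v)))"

definition closed_walk :: "nat \<Rightarrow> int list \<Rightarrow> int list \<Rightarrow> int list \<Rightarrow> bool" where
  "closed_walk g r w0 es \<longleftrightarrow>
     w0 \<in> lists (arcs g) \<and> es \<in> lists (arcs g) \<and> vtx g r (w0 @ es) = vtx g r w0"

end

theory Submission
  imports Defs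
begin

lemma arcs_neg: "a \<in> arcs g \<Longrightarrow> - a \<in> arcs g" unfolding arcs_def by auto
lemma arcs_nz: "a \<in> arcs g \<Longrightarrow> a \<noteq> 0" unfolding arcs_def by auto

lemma ws_L: "(x,y) \<in> word_step g r \<Longrightarrow> r \<in> lists (arcs g) \<Longrightarrow> x \<in> lists (arcs g) \<and> y \<in> lists (arcs g)"
  unfolding word_step_def using arcs_neg by auto

lemma ws_app: "(x,y) \<in> word_step g r \<Longrightarrow> z \<in> lists (arcs g) \<Longrightarrow> (x@z, y@z) \<in> word_step g r"
  unfolding word_step_def
  apply (elim UnE CollectE exE conjE)
   apply (rule UnI1, simp, metis append.assoc append_in_lists_conv)
  apply (rule UnI2, simp, metis append.assoc append_in_lists_conv)
  done

lemma ws_pre: "(x,y) \<in> word_step g r \<Longrightarrow> z \<in> lists (arcs g) \<Longrightarrow> (z@x, z@y) \<in> word_step g r"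
  unfolding word_step_def
  apply (elim UnE CollectE exE conjE)
   apply (rule UnI1, simp, metis append.assoc append_in_lists_conv)
  apply (rule UnI2, simp, metis append.assoc append_in_lists_conv)
  done

lemma we_app: assumes "(x,y) \<in> word_eq g r" "z \<in> lists (arcs g)" shows "(x@z, y@z) \<in> word_eq g r"
  using assms(1) unfolding word_eq_def
proof (induction rule: rtrancl_induct)
  case base then show ?case by simp
next
  case (step y w)
  then have "(y@z, w@z) \<in> word_step g r \<union> (word_step g r)\<inverse>" using ws_app[OF _ assms(2)] by blast
  with step show ?case by (meson rtrancl.rtrancl_into_rtrancl)
qed

lemma we_pre: assumes "(x,y) \<in> word_eq g r" "z \<in> lists (arcs g)" shows "(z@x, z@y) \<in> word_eq g r"
  using assms(1) unfolding word_eq_def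
proof (induction rule: rtrancl_induct)
  case base then show ?case by simp
next
  case (step y w)
  then have "(z@y, z@w) \<in> word_step g r \<union> (word_step g r)\<inverse>" using ws_pre[OF _ assms(2)] by blast
  with step show ?case by (meson rtrancl.rtrancl_into_rtrancl)
qed

lemma we_refl[simp]: "(x,x) \<in> word_eq g r" unfolding word_eq_def by simp

lemma we_sym: "(x,y) \<in> word_eq g r \<Longrightarrow> (y,x) \<in> word_eq g r"
  unfolding word_eq_def by (metis converse_Un converse_converse converse_iff rtrancl_converseI sup_commute)

lemma we_trans: "(x,y) \<in> word_eq g r \<Longrightarrow> (y,z) \<in> word_eq g r \<Longrightarrow> (x,z) \<in> word_eq g r"
  unfolding word_eq_def by (meson rtrancl_trans)

lemma vtx_eq: "vtx g r x = vtx g r y \<longleftrightarrow> (x,y) \<in> word_eq g r"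
  unfolding vtx_def
  by (smt (verit, best) Image_singleton_iff equalityI subsetI we_refl we_sym we_trans)

lemma ws_we: "(x,y) \<in> word_step g r \<Longrightarrow> (x,y) \<in> word_eq g r"
  unfolding word_eq_def by auto


lemma inv_L: "q \<in> lists (arcs g) \<Longrightarrow> inv_word q \<in> lists (arcs g)"
  unfolding inv_word_def using arcs_neg by auto

lemma we_cancel1: "(u @ [a, -a], u) \<in> word_eq g r" if "u \<in> lists (arcs g)" "a \<in> arcs g"
  apply (rule ws_we) unfolding word_step_def apply (rule UnI1, rule CollectI)
  apply (rule exI[of _ u], rule exI[of _ "[]"], rule exI[of _ a]) using that by simp

lemma we_r: "(u @ r, u) \<in> word_eq g r" if "u \<in> lists (arcs g)" "r \<in> lists (arcs g)"
  apply (rule ws_we) unfolding word_step_def apply (rule UnI2, rule CollectI)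
  apply (rule exI[of _ u], rule exI[of _ "[]"]) using that by simp

lemma inv_cons: "inv_word (a # q) = inv_word q @ [-a]" unfolding inv_word_def by simp

lemma we_qinv: "q \<in> lists (arcs g) \<Longrightarrow> (q @ inv_word q, []) \<in> word_eq g r"
proof (induction q)
  case Nil then show ?case by (simp add: inv_word_def)
next
  case (Cons a q)
  have a: "a \<in> arcs g" "q \<in> lists (arcs g)" using Cons.prems by auto
  have ih: "(q @ inv_word q, []) \<in> word_eq g r" using Cons.IH[OF a(2)] .
  have "((q @ inv_word q) @ [-a], [-a]) \<in> word_eq g r"
    using we_app[OF ih, of "[-a]"] arcs_neg[OF a(1)] by simp
  then have "([a] @ (q @ inv_word q) @ [-a], [a] @ [-a]) \<in> word_eq g r"
    by (rule we_pre) (simp add: a(1))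
  moreover have "([] @ [a, -a], []) \<in> word_eq g r" by (rule we_cancel1) (simp_all add: a(1))
  ultimately have "([a] @ (q @ inv_word q) @ [-a], []) \<in> word_eq g r" by (simp add: we_trans)
  then show ?case by (simp add: inv_cons)
qed

lemma we_invq: "q \<in> lists (arcs g) \<Longrightarrow> (inv_word q @ q, []) \<in> word_eq g r"
proof (induction q)
  case Nil then show ?case by (simp add: inv_word_def)
next
  case (Cons a q)
  have a: "a \<in> arcs g" "q \<in> lists (arcs g)" using Cons by auto
  have "(inv_word q @ [-a, - (-a)], inv_word q) \<in> word_eq g r"
    using we_cancel1[OF inv_L[OF a(2)] arcs_neg[OF a(1)]] .
  then have "(inv_word q @ [-a, a] @ q, inv_word q @ q) \<in> word_eq g r"
    using we_app[OF _ a(2)] by fastforce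
  then show ?case using Cons by (auto simp: inv_cons intro: we_trans)
qed

lemma vtx_cancel_right: "p \<in> lists (arcs g) \<Longrightarrow> q \<in> lists (arcs g) \<Longrightarrow> vtx g r (p @ q @ inv_word q) = vtx g r p"
  unfolding vtx_eq using we_pre[OF we_qinv] by fastforce

lemma vtx_cancel_right2: "p \<in> lists (arcs g) \<Longrightarrow> q \<in> lists (arcs g) \<Longrightarrow> vtx g r (p @ inv_word q @ q) = vtx g r p"
  unfolding vtx_eq using we_pre[OF we_invq] by fastforce

lemma vtx_app: "vtx g r x = vtx g r y \<Longrightarrow> z \<in> lists (arcs g) \<Longrightarrow> vtx g r (x @ z) = vtx g r (y @ z)"
  unfolding vtx_eq by (rule we_app)

lemma vtx_iff: assumes "z \<in> lists (arcs g)" "u \<in> lists (arcs g)" "q \<in> lists (arcs g)"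
  shows "vtx g r (z @ inv_word q) = vtx g r u \<longleftrightarrow> vtx g r (u @ q) = vtx g r z"
proof
  assume H: "vtx g r (z @ inv_word q) = vtx g r u"
  have "vtx g r ((z @ inv_word q) @ q) = vtx g r (u @ q)" by (rule vtx_app[OF H assms(3)])
  moreover have "vtx g r (z @ inv_word q @ q) = vtx g r z" by (rule vtx_cancel_right2[OF assms(1) assms(3)])
  ultimately show "vtx g r (u @ q) = vtx g r z" by simp
next
  assume H: "vtx g r (u @ q) = vtx g r z"
  have "vtx g r ((u @ q) @ inv_word q) = vtx g r (z @ inv_word q)" by (rule vtx_app[OF H inv_L[OF assms(3)]])
  moreover have "vtx g r (u @ q @ inv_word q) = vtx g r u" by (rule vtx_cancel_right[OF assms(2) assms(3)])
  ultimately show "vtx g r (z @ inv_word q) = vtx g r u" by simp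
qed

lemma vtx_app1_iff: assumes "p \<in> lists (arcs g)" "q \<in> lists (arcs g)" "a \<in> arcs g"
  shows "vtx g r (p @ [a]) = vtx g r (q @ [a]) \<longleftrightarrow> vtx g r p = vtx g r q"
proof -
  have e1: "vtx g r ((p @ [a]) @ inv_word [a]) = vtx g r p"
    using vtx_cancel_right[OF assms(1), of "[a]" r] assms(3) by simp
  have e2: "vtx g r ((p @ [a]) @ inv_word [a]) = vtx g r q \<longleftrightarrow> vtx g r (q @ [a]) = vtx g r (p @ [a])"
    by (rule vtx_iff) (use assms in auto)
  have "vtx g r p = vtx g r q \<longleftrightarrow> vtx g r (q @ [a]) = vtx g r (p @ [a])" using e1 e2 by simp
  then show ?thesis by (metis (no_types))
qed

lemma closed_trivial: assumes "w0 \<in> lists (arcs g)" "es \<in> lists (arcs g)" "vtx g r (w0 @ es) = vtx g r w0"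
  shows "(es, []) \<in> word_eq g r"
proof -
  have h0: "(w0 @ es, w0) \<in> word_eq g r" using assms(3) by (simp add: vtx_eq)
  have h1: "(inv_word w0 @ w0 @ es, inv_word w0 @ w0) \<in> word_eq g r"
    using we_pre[OF h0 inv_L[OF assms(1)]] .
  have h2: "(inv_word w0 @ w0 @ es, es) \<in> word_eq g r"
    using we_app[OF we_invq[OF assms(1)] assms(2)] by simp
  have h3: "(inv_word w0 @ w0, []) \<in> word_eq g r" using we_invq[OF assms(1)] .
  show ?thesis by (rule we_trans[OF we_trans[OF we_sym[OF h2] h1] h3])
qed

fun Sw :: "(int list \<Rightarrow> int \<Rightarrow> 'b::comm_monoid_add) \<Rightarrow> int list \<Rightarrow> int list \<Rightarrow> 'b" where
  "Sw \<phi> w [] = 0"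
| "Sw \<phi> w (e # es) = \<phi> w e + Sw \<phi> (w @ [e]) es"

lemma Sw_append: "Sw \<phi> w (xs @ ys) = Sw \<phi> w xs + Sw \<phi> (w @ xs) ys"
  by (induction xs arbitrary: w) (auto simp: add.assoc)

lemma Sw_sum: "Sw \<phi> w es = (\<Sum>m<length es. \<phi> (w @ take m es) (es ! m))"
  by (induction es arbitrary: w) (simp_all add: sum.lessThan_Suc_shift del: sum.lessThan_Suc)

lemma Sw_cong:
  assumes "\<forall>w w' e. (w, w') \<in> word_eq g r \<longrightarrow> e \<in> arcs g \<longrightarrow> \<phi> w e = \<phi> w' e"
  shows "(w, w') \<in> word_eq g r \<Longrightarrow> es \<in> lists (arcs g) \<Longrightarrow> Sw \<phi> w es = Sw \<phi> w' es"
proof (induction es arbitrary: w w')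
  case Nil then show ?case by simp
next
  case (Cons e es)
  then have "(w @ [e], w' @ [e]) \<in> word_eq g r" using we_app by fastforce
  with Cons assms show ?case by auto
qed

lemma Sw_insert:
  assumes "\<forall>w w' e. (w, w') \<in> word_eq g r \<longrightarrow> e \<in> arcs g \<longrightarrow> \<phi> w e = \<phi> w' e"
    and "(w0 @ xs @ M, w0 @ xs) \<in> word_eq g r" and "ys \<in> lists (arcs g)"
  shows "Sw \<phi> w0 (xs @ M @ ys) = Sw \<phi> w0 (xs @ ys) + Sw \<phi> (w0 @ xs) M"
proof -
  have "Sw \<phi> (w0 @ xs @ M) ys = Sw \<phi> (w0 @ xs) ys" using Sw_cong[OF assms(1) assms(2,3)] .
  then show ?thesis by (simp add: Sw_append add_ac)
qed

definition trc :: "nat \<Rightarrow> int list \<Rightarrow> int list \<Rightarrow> int list \<Rightarrow> int list set \<Rightarrow> int \<Rightarrow> int" where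
  "trc g r w es v a = Sw (\<lambda>w e. if vtx g r w = v \<and> e = a then (1::int) else 0) w es"

lemma card_sum_int: "int (card {m. m < (n::nat) \<and> P m}) = (\<Sum>m<n. if P m then 1 else 0)"
proof (induction n)
  case 0 then show ?case by simp
next
  case (Suc n)
  have fin: "finite {m. m < n \<and> P m}" by simp
  show ?case
  proof (cases "P n")
    case True
    have "{m. m < Suc n \<and> P m} = insert n {m. m < n \<and> P m}" using True less_Suc_eq by auto
    then have "card {m. m < Suc n \<and> P m} = Suc (card {m. m < n \<and> P m})"
      using card_insert_disjoint[OF fin] by simp
    then show ?thesis using Suc.IH True by simp
  next
    case False
    have "{m. m < Suc n \<and> P m} = {m. m < n \<and> P m}" using False less_Suc_eq by auto
    then show ?thesis using Suc.IH False by simp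
  qed
qed

lemma trav_trc: "int (traversals g r w es v a) = trc g r w es v a"
  unfolding traversals_def trc_def Sw_sum by (rule card_sum_int)

lemma trc_cong: "\<forall>w w' e. (w, w') \<in> word_eq g r \<longrightarrow> e \<in> arcs g \<longrightarrow>
   (\<lambda>w e. if vtx g r w = v \<and> e = a then (1::int) else 0) w e = (\<lambda>w e. if vtx g r w = v \<and> e = a then (1::int) else 0) w' e"
  by (auto simp: vtx_eq[symmetric])

definition phiA :: "nat \<Rightarrow> int list \<Rightarrow> (int list set \<Rightarrow> real) \<Rightarrow> (int \<Rightarrow> real) \<Rightarrow> int list \<Rightarrow> int \<Rightarrow> real" where
  "phiA g r \<alpha> \<eta> w e = (\<alpha> (vtx g r w) + \<alpha> (vtx g r (w @ [e]))) / 2 * \<eta> e"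

lemma phiA_cong: "\<forall>w w' e. (w, w') \<in> word_eq g r \<longrightarrow> e \<in> arcs g \<longrightarrow> phiA g r \<alpha> \<eta> w e = phiA g r \<alpha> \<eta> w' e"
proof (intro allI impI)
  fix w w' e assume "(w, w') \<in> word_eq g r" "e \<in> arcs g"
  then have "(w @ [e], w' @ [e]) \<in> word_eq g r" using we_app by fastforce
  with \<open>(w, w') \<in> word_eq g r\<close> show "phiA g r \<alpha> \<eta> w e = phiA g r \<alpha> \<eta> w' e"
    unfolding phiA_def by (metis vtx_eq)
qed

lemma supp_sum:
  assumes "finite X" "{v. F v \<noteq> 0} \<subseteq> X"
  shows "(\<Sum>v\<in>{v. F v \<noteq> 0}. real_of_int (F v)) = (\<Sum>v\<in>X. real_of_int (F v))"
  by (rule sum.mono_neutral_left) (use assms in auto)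


locale Ctx =
  fixes g :: nat and r :: "int list" and i j k l :: nat and \<alpha> :: "int list set \<Rightarrow> real"
  assumes dist: "distinct r" and setr: "set r = arcs g"
    and ij: "i < j" and jk: "j < k" and kl: "k < l" and ll: "l < length r"
    and rk: "r ! k = - (r ! i)" and rl: "r ! l = - (r ! j)"
    and der: "derives_from g r (cob r i k) \<alpha>"
begin

lemma r_L: "r \<in> lists (arcs g)" using setr by auto

lemma take_L: "take m r \<in> lists (arcs g)"
  using r_L by (meson in_lists_conv_set in_set_takeD)

lemma nth_arc: "m < length r \<Longrightarrow> r ! m \<in> arcs g" using setr nth_mem by blast

lemma nth_idx: "m < length r \<Longrightarrow> m' < length r \<Longrightarrow> r ! m = r ! m' \<longleftrightarrow> m = m'"
  using dist by (simp add: nth_eq_iff_index_eq)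

lemma the_idx: "m < length r \<Longrightarrow> (THE m'. m' < length r \<and> r ! m' = r ! m) = m"
  by (rule the_equality) (auto simp: nth_idx)

lemma arc_idx: "a \<in> arcs g \<Longrightarrow> \<exists>m<length r. r ! m = a"
  using setr by (metis in_set_conv_nth)

lemma lf_nth: "m < length r \<Longrightarrow> left_face g r w (r ! m) = vtx g r (w @ inv_word (take m r))"
  unfolding left_face_def using the_idx by simp

lemma cob_nth: "m < length r \<Longrightarrow> p < length r \<Longrightarrow> q < length r \<Longrightarrow> p \<noteq> q \<Longrightarrow>
   cob r p q (r ! m) = (if m = p then 1 else if m = q then -1 else 0)"
  unfolding cob_def using nth_idx by auto

lemma cob_neg: assumes "r ! q = - (r ! p)" "p < length r" "q < length r" "p \<noteq> q"
  shows "cob r p q (- a) = - cob r p q a"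
proof -
  have nz: "r ! p \<noteq> 0" using nth_arc[OF assms(2)] arcs_nz by blast
  have ne: "r ! p \<noteq> r ! q" using nth_idx assms by blast
  show ?thesis unfolding cob_def using assms nz ne by auto
qed

lemma ik: "i < length r" "k < length r" "i \<noteq> k" "j < length r" "l < length r" "j \<noteq> l"
  using ij jk kl ll by auto

lemma omega_neg: "cob r i k (- a) = - cob r i k a"
  using cob_neg[OF rk] ik by auto

lemma eta_neg: "cob r j l (- a) = - cob r j l a"
  using cob_neg[OF rl] ik by auto

lemma alpha_walk: "w \<in> lists (arcs g) \<Longrightarrow> z \<in> lists (arcs g) \<Longrightarrow>
   \<alpha> (vtx g r (w @ z)) = \<alpha> (vtx g r w) + sum_list (map (cob r i k) z)"
proof (induction z rule: rev_induct)
  case Nil then show ?case by simp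
next
  case (snoc a z)
  have wz: "w @ z \<in> lists (arcs g)" and a: "a \<in> arcs g" and z: "z \<in> lists (arcs g)"
    using snoc.prems by auto
  have "cob r i k a = \<alpha> (vtx g r ((w @ z) @ [a])) - \<alpha> (vtx g r (w @ z))"
    using der[unfolded derives_from_def, rule_format, OF wz a] .
  then show ?case using snoc.IH[OF snoc.prems(1) z] by simp
qed

lemma Omega: assumes "m \<le> length r"
  shows "sum_list (map (cob r i k) (take m r)) = (if i < m then 1 else 0) - (if k < m then 1 else 0)"
proof -
  have "sum_list (map (cob r i k) (take m r)) = (\<Sum>t<m. cob r i k (r ! t))"
    using assms by (simp add: sum_list_sum_nth atLeast0LessThan min_def)
  also have "\<dots> = (\<Sum>t<m. (if t = i then 1 else 0) - (if t = k then 1 else 0))"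
    by (rule sum.cong) (use assms ik in \<open>auto simp: cob_nth\<close>)
  also have "\<dots> = (if i < m then 1 else 0) - (if k < m then 1 else 0)"
    by (simp add: sum_subtractf)
  finally show ?thesis .
qed

lemma inv_sum: assumes "\<And>x. f (- x) = - f x"
  shows "sum_list (map f (inv_word z)) = - sum_list (map (f::int \<Rightarrow> real) z)"
  by (induction z) (auto simp: inv_cons assms inv_word_def)

lemma face_count: assumes "u \<in> lists (arcs g)" "z \<in> lists (arcs g)" "c \<in> arcs g"
  shows "trc g r u r (vtx g r z) c = (if left_face g r z c = vtx g r u then 1 else 0)"
proof -
  obtain mc where mc: "mc < length r" "r ! mc = c" using arc_idx[OF assms(3)] by blast
  have "trc g r u r (vtx g r z) c = (\<Sum>m<length r. if vtx g r (u @ take m r) = vtx g r z \<and> r ! m = c then 1 else 0)"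
    unfolding trc_def Sw_sum by simp
  also have "\<dots> = (\<Sum>m<length r. if m = mc then (if vtx g r (u @ take mc r) = vtx g r z then 1 else 0) else 0)"
    by (rule sum.cong) (use mc nth_idx in auto)
  also have "\<dots> = (if vtx g r (u @ take mc r) = vtx g r z then 1 else 0)"
    using mc by simp
  also have "\<dots> = (if left_face g r z c = vtx g r u then 1 else 0)"
    using lf_nth[OF mc(1), of z] mc vtx_iff[OF assms(2) assms(1) take_L] by auto
  finally show ?thesis .
qed

lemma face_S: assumes "u \<in> lists (arcs g)"
  shows "Sw (phiA g r \<alpha> (cob r j l)) u r = 1"
proof -
  define f where "f m = (\<alpha> (vtx g r (u @ take m r)) + \<alpha> (vtx g r (u @ take (Suc m) r))) / 2" for m
  have fm: "f m = \<alpha> (vtx g r u) + (sum_list (map (cob r i k) (take m r)) + sum_list (map (cob r i k) (take (Suc m) r))) / 2" for m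
    unfolding f_def using alpha_walk[OF assms take_L] by (simp add: field_simps)
  have "Sw (phiA g r \<alpha> (cob r j l)) u r = (\<Sum>m<length r. f m * ((if m = j then 1 else 0) - (if m = l then 1 else 0)))"
    unfolding Sw_sum phiA_def f_def
    by (rule sum.cong) (use ik in \<open>auto simp: cob_nth take_Suc_conv_app_nth\<close>)
  also have "\<dots> = (\<Sum>m<length r. (if m = j then f m else 0)) - (\<Sum>m<length r. (if m = l then f m else 0))"
    by (subst sum_subtractf[symmetric]) (rule sum.cong, auto)
  also have "\<dots> = f j - f l"
    using ik by simp
  also have "\<dots> = 1"
    unfolding fm using ij jk kl ll by (simp add: Omega)
  finally show ?thesis .
qed


definition good :: "int list \<Rightarrow> int list \<Rightarrow> int list \<Rightarrow> (int list set \<Rightarrow> int) \<Rightarrow> bool" where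
  "good w0 x y F \<longleftrightarrow> (\<forall>v. v \<notin> cover_vertices g r \<longrightarrow> F v = 0) \<and> finite {v. F v \<noteq> 0} \<and>
   (\<forall>w \<in> lists (arcs g). \<forall>a \<in> arcs g.
      (trc g r w0 x (vtx g r w) a - trc g r w0 x (vtx g r (w @ [a])) (- a))
    - (trc g r w0 y (vtx g r w) a - trc g r w0 y (vtx g r (w @ [a])) (- a))
    = F (left_face g r w a) - F (left_face g r (w @ [a]) (- a))) \<and>
   (\<Sum>v\<in>{v. F v \<noteq> 0}. real_of_int (F v)) = Sw (phiA g r \<alpha> (cob r j l)) w0 x - Sw (phiA g r \<alpha> (cob r j l)) w0 y"

lemma good_trans: assumes "good w0 x y F1" "good w0 y z F2"
  shows "good w0 x z (\<lambda>v. F1 v + F2 v)"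
proof -
  let ?X = "{v. F1 v \<noteq> 0} \<union> {v. F2 v \<noteq> 0}"
  have fin: "finite ?X" using assms unfolding good_def by auto
  have sub: "{v. F1 v + F2 v \<noteq> 0} \<subseteq> ?X" by auto
  have "(\<Sum>v\<in>{v. F1 v + F2 v \<noteq> 0}. real_of_int (F1 v + F2 v))
      = (\<Sum>v\<in>?X. real_of_int (F1 v + F2 v))"
    using supp_sum[OF fin sub] by simp
  also have "\<dots> = (\<Sum>v\<in>?X. real_of_int (F1 v)) + (\<Sum>v\<in>?X. real_of_int (F2 v))"
    by (simp add: sum.distrib)
  also have "\<dots> = (\<Sum>v\<in>{v. F1 v \<noteq> 0}. real_of_int (F1 v)) + (\<Sum>v\<in>{v. F2 v \<noteq> 0}. real_of_int (F2 v))"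
    using supp_sum[OF fin, of F1] supp_sum[OF fin, of F2] by auto
  finally have S: "(\<Sum>v\<in>{v. F1 v + F2 v \<noteq> 0}. real_of_int (F1 v + F2 v))
     = (\<Sum>v\<in>{v. F1 v \<noteq> 0}. real_of_int (F1 v)) + (\<Sum>v\<in>{v. F2 v \<noteq> 0}. real_of_int (F2 v))" .
  show ?thesis
    unfolding good_def
  proof (intro conjI ballI allI impI)
    show "finite {v. F1 v + F2 v \<noteq> 0}" using fin sub finite_subset by blast
  next
    fix v assume "v \<notin> cover_vertices g r" then show "F1 v + F2 v = 0" using assms unfolding good_def by auto
  next
    fix w a assume wa: "w \<in> lists (arcs g)" "a \<in> arcs g"
    show "(trc g r w0 x (vtx g r w) a - trc g r w0 x (vtx g r (w @ [a])) (- a))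
    - (trc g r w0 z (vtx g r w) a - trc g r w0 z (vtx g r (w @ [a])) (- a))
    = (F1 (left_face g r w a) + F2 (left_face g r w a)) - (F1 (left_face g r (w @ [a]) (- a)) + F2 (left_face g r (w @ [a]) (- a)))"
    proof -
      have h1: "(trc g r w0 x (vtx g r w) a - trc g r w0 x (vtx g r (w @ [a])) (- a))
    - (trc g r w0 y (vtx g r w) a - trc g r w0 y (vtx g r (w @ [a])) (- a))
    = F1 (left_face g r w a) - F1 (left_face g r (w @ [a]) (- a))"
        using assms(1)[unfolded good_def, THEN conjunct2, THEN conjunct2, THEN conjunct1, rule_format, OF wa] .
      have h2: "(trc g r w0 y (vtx g r w) a - trc g r w0 y (vtx g r (w @ [a])) (- a))
    - (trc g r w0 z (vtx g r w) a - trc g r w0 z (vtx g r (w @ [a])) (- a))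
    = F2 (left_face g r w a) - F2 (left_face g r (w @ [a]) (- a))"
        using assms(2)[unfolded good_def, THEN conjunct2, THEN conjunct2, THEN conjunct1, rule_format, OF wa] .
      show ?thesis using h1 h2 by linarith
    qed
  next
    show "(\<Sum>v\<in>{v. F1 v + F2 v \<noteq> 0}. real_of_int (F1 v + F2 v)) = Sw (phiA g r \<alpha> (cob r j l)) w0 x - Sw (phiA g r \<alpha> (cob r j l)) w0 z"
      using S assms unfolding good_def by simp
  qed
qed

lemma good_sym: assumes "good w0 x y F" shows "good w0 y x (\<lambda>v. - F v)"
proof -
  have "(\<Sum>v\<in>{v. - F v \<noteq> 0}. real_of_int (- F v)) = - (\<Sum>v\<in>{v. F v \<noteq> 0}. real_of_int (F v))"
    by (simp add: sum_negf)
  note e = this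
  have A: "\<forall>v. v \<notin> cover_vertices g r \<longrightarrow> F v = 0" "finite {v. F v \<noteq> 0}"
    "\<forall>w \<in> lists (arcs g). \<forall>a \<in> arcs g.
      (trc g r w0 x (vtx g r w) a - trc g r w0 x (vtx g r (w @ [a])) (- a))
    - (trc g r w0 y (vtx g r w) a - trc g r w0 y (vtx g r (w @ [a])) (- a))
    = F (left_face g r w a) - F (left_face g r (w @ [a]) (- a))"
   "(\<Sum>v\<in>{v. F v \<noteq> 0}. real_of_int (F v)) = Sw (phiA g r \<alpha> (cob r j l)) w0 x - Sw (phiA g r \<alpha> (cob r j l)) w0 y"
    using assms unfolding good_def by blast+
  show ?thesis unfolding good_def
  proof (intro conjI ballI allI impI)
    fix v assume "v \<notin> cover_vertices g r" then show "- F v = 0" using A(1) by simp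
  next
    show "finite {v. - F v \<noteq> 0}" using A(2) by simp
  next
    fix w a assume wa: "w \<in> lists (arcs g)" "a \<in> arcs g"
    have "(trc g r w0 x (vtx g r w) a - trc g r w0 x (vtx g r (w @ [a])) (- a))
    - (trc g r w0 y (vtx g r w) a - trc g r w0 y (vtx g r (w @ [a])) (- a))
    = F (left_face g r w a) - F (left_face g r (w @ [a]) (- a))" using A(3) wa by blast
    then show "(trc g r w0 y (vtx g r w) a - trc g r w0 y (vtx g r (w @ [a])) (- a))
    - (trc g r w0 x (vtx g r w) a - trc g r w0 x (vtx g r (w @ [a])) (- a))
    = - F (left_face g r w a) - - F (left_face g r (w @ [a]) (- a))" by linarith
  next
    show "(\<Sum>v\<in>{v. - F v \<noteq> 0}. real_of_int (- F v)) = Sw (phiA g r \<alpha> (cob r j l)) w0 y - Sw (phiA g r \<alpha> (cob r j l)) w0 x"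
      using e A(4) by simp
  qed
qed

lemma good_refl: "good w0 x x (\<lambda>v. 0)"
  unfolding good_def by simp

lemma trc_Nil[simp]: "trc g r u [] v a = 0" unfolding trc_def by simp

lemma good_loop:
  assumes "w0 \<in> lists (arcs g)" "ys \<in> lists (arcs g)"
    and "(w0 @ xs @ M, w0 @ xs) \<in> word_eq g r" and "good (w0 @ xs) M [] F"
  shows "good w0 (xs @ M @ ys) (xs @ ys) F"
proof -
  have T: "trc g r w0 (xs @ M @ ys) v a = trc g r w0 (xs @ ys) v a + trc g r (w0 @ xs) M v a" for v a
    unfolding trc_def by (rule Sw_insert[OF trc_cong assms(3,2)])
  have S: "Sw (phiA g r \<alpha> (cob r j l)) w0 (xs @ M @ ys) = Sw (phiA g r \<alpha> (cob r j l)) w0 (xs @ ys) + Sw (phiA g r \<alpha> (cob r j l)) (w0 @ xs) M"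
    by (rule Sw_insert[OF phiA_cong assms(3,2)])
  show ?thesis using assms(4) unfolding good_def T S by simp
qed

lemma good_pair: assumes "u \<in> lists (arcs g)" "a \<in> arcs g"
  shows "good u [a, - a] [] (\<lambda>v. 0)"
proof -
  have T: "trc g r u [a, - a] v b = (if vtx g r u = v \<and> a = b then 1 else 0) + (if vtx g r (u @ [a]) = v \<and> - a = b then 1 else 0)" for v b
    unfolding trc_def by simp
  have nz: "a \<noteq> 0" using arcs_nz assms(2) by blast
  have c1: "vtx g r (u @ [a, - a]) = vtx g r u" using we_cancel1[OF assms] vtx_eq by blast
  have B: "trc g r u [a, - a] (vtx g r w) b - trc g r u [a, - a] (vtx g r (w @ [b])) (- b) = 0"
    if w: "w \<in> lists (arcs g)" and b: "b \<in> arcs g" for w b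
  proof -
    have F1: "vtx g r (u @ [a]) = vtx g r (w @ [a]) \<longleftrightarrow> vtx g r u = vtx g r w"
      by (rule vtx_app1_iff[OF assms(1) w assms(2)])
    have wL: "w @ [- a] \<in> lists (arcs g)" using w arcs_neg[OF assms(2)] by simp
    have e1: "vtx g r (w @ [- a, a]) = vtx g r w"
      using we_cancel1[OF w arcs_neg[OF assms(2)], of r] by (simp add: vtx_eq)
    have e2: "vtx g r ((w @ [- a]) @ [a]) = vtx g r (u @ [a]) \<longleftrightarrow> vtx g r (w @ [- a]) = vtx g r u"
      by (rule vtx_app1_iff[OF wL assms(1) assms(2)])
    have F2: "vtx g r u = vtx g r (w @ [- a]) \<longleftrightarrow> vtx g r (u @ [a]) = vtx g r w"
      using e1 e2 by auto
    show ?thesis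
    proof (cases "b = a")
      case True
      then show ?thesis unfolding T using nz F1 by simp
    next
      case ba: False
      show ?thesis
      proof (cases "b = - a")
        case True
        then show ?thesis unfolding T using nz F2 by simp
      next
        case False
        then have "a \<noteq> - b" by auto
        then show ?thesis unfolding T using False ba by auto
      qed
    qed
  qed
  have "Sw (phiA g r \<alpha> (cob r j l)) u [a, - a] = 0"
    by (simp add: phiA_def c1 eta_neg field_simps)
  then show ?thesis unfolding good_def using B by simp
qed

lemma good_face: assumes "u \<in> lists (arcs g)"
  shows "good u r [] (\<lambda>v. if v = vtx g r u then 1 else 0)"
proof -
  have cv: "vtx g r u \<in> cover_vertices g r" unfolding cover_vertices_def using assms by blast
  have sup: "{v. (if v = vtx g r u then 1 else 0) \<noteq> (0::int)} = {vtx g r u}" by auto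
  show ?thesis unfolding good_def sup
  proof (intro conjI ballI allI impI)
    fix v assume "v \<notin> cover_vertices g r" then show "(if v = vtx g r u then 1 else 0) = (0::int)"
      using cv by auto
  next
    show "finite {vtx g r u}" by simp
  next
    fix w a assume w: "w \<in> lists (arcs g)" and a: "a \<in> arcs g"
    have e1: "trc g r u r (vtx g r w) a = (if left_face g r w a = vtx g r u then 1 else 0)"
      by (rule face_count[OF assms w a])
    have e2: "trc g r u r (vtx g r (w @ [a])) (- a) = (if left_face g r (w @ [a]) (- a) = vtx g r u then 1 else 0)"
      by (rule face_count[OF assms _ arcs_neg[OF a]]) (simp add: w a)
    show "trc g r u r (vtx g r w) a - trc g r u r (vtx g r (w @ [a])) (- a) -
          (trc g r u [] (vtx g r w) a - trc g r u [] (vtx g r (w @ [a])) (- a)) =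
          (if left_face g r w a = vtx g r u then 1 else 0) - (if left_face g r (w @ [a]) (- a) = vtx g r u then 1 else 0)"
      unfolding e1 e2 by simp
  next
    show "(\<Sum>v\<in>{vtx g r u}. real_of_int (if v = vtx g r u then 1 else 0)) =
      Sw (phiA g r \<alpha> (cob r j l)) u r - Sw (phiA g r \<alpha> (cob r j l)) u []"
      using face_S[OF assms] by simp
  qed
qed

lemma good_step: assumes "(x, y) \<in> word_step g r" "w0 \<in> lists (arcs g)"
  shows "\<exists>F. good w0 x y F"
  using assms(1) unfolding word_step_def
proof (elim UnE CollectE exE conjE)
  fix xs ys a assume h: "(x, y) = (xs @ [a, - a] @ ys, xs @ ys)" "xs \<in> lists (arcs g)" "ys \<in> lists (arcs g)" "a \<in> arcs g"
  have u: "w0 @ xs \<in> lists (arcs g)" using h assms by simp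
  have L: "(w0 @ xs @ [a, - a], w0 @ xs) \<in> word_eq g r" using we_cancel1[OF u h(4)] by simp
  have xy: "x = xs @ [a, - a] @ ys" "y = xs @ ys" using h(1) by simp_all
  from good_loop[OF assms(2) h(3) L good_pair[OF u h(4)]] show ?thesis unfolding xy by blast
next
  fix xs ys assume h: "(x, y) = (xs @ r @ ys, xs @ ys)" "xs \<in> lists (arcs g)" "ys \<in> lists (arcs g)"
  have u: "w0 @ xs \<in> lists (arcs g)" using h assms by simp
  have L: "(w0 @ xs @ r, w0 @ xs) \<in> word_eq g r" using we_r[OF u r_L] by simp
  have xy: "x = xs @ r @ ys" "y = xs @ ys" using h(1) by simp_all
  from good_loop[OF assms(2) h(3) L good_face[OF u]] show ?thesis unfolding xy by blast
qed

lemma good_exists: assumes "(x, y) \<in> word_eq g r" "w0 \<in> lists (arcs g)"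
  shows "\<exists>F. good w0 x y F"
  using assms(1) unfolding word_eq_def
proof (induction rule: rtrancl_induct)
  case base then show ?case by (rule exI, rule good_refl)
next
  case (step y z)
  then obtain F1 where F1: "good w0 x y F1" by blast
  from step(2) have "(y, z) \<in> word_step g r \<or> (z, y) \<in> word_step g r" by blast
  then obtain F2 where F2: "good w0 y z F2"
  proof
    assume "(y, z) \<in> word_step g r"
    from good_step[OF this assms(2)] obtain F where "good w0 y z F" by (elim exE)
    then show thesis by (rule that)
  next
    assume "(z, y) \<in> word_step g r"
    from good_step[OF this assms(2)] obtain F where "good w0 z y F" by (elim exE)
    then show thesis by (rule that[OF good_sym])
  qed
  show ?case by (rule exI, rule good_trans[OF F1 F2])
qed


lemma fills_unique: assumes "fills g r w0 es F1" "fills g r w0 es F2" shows "F1 = F2"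
proof
  fix v
  define G where "G v = F1 v - F2 v" for v
  have bd: "G (left_face g r w a) = G (left_face g r (w @ [a]) (- a))"
    if "w \<in> lists (arcs g)" "a \<in> arcs g" for w a
  proof -
    have "int (traversals g r w0 es (vtx g r w) a) - int (traversals g r w0 es (vtx g r (w @ [a])) (- a))
        = F1 (left_face g r w a) - F1 (left_face g r (w @ [a]) (- a))"
      using assms(1)[unfolded fills_def, THEN conjunct2, THEN conjunct2, rule_format, OF that] .
    moreover have "int (traversals g r w0 es (vtx g r w) a) - int (traversals g r w0 es (vtx g r (w @ [a])) (- a))
        = F2 (left_face g r w a) - F2 (left_face g r (w @ [a]) (- a))"
      using assms(2)[unfolded fills_def, THEN conjunct2, THEN conjunct2, rule_format, OF that] .
    ultimately show ?thesis unfolding G_def by linarith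
  qed
  define c where "c = take (Suc j) r @ inv_word (take l r)"
  have cL: "c \<in> lists (arcs g)" unfolding c_def using take_L inv_L by simp
  have Gstep: "G (vtx g r (p @ c)) = G (vtx g r p)" if p: "p \<in> lists (arcs g)" for p
  proof -
    have w: "p @ take j r \<in> lists (arcs g)" using p take_L by simp
    have a: "r ! j \<in> arcs g" using nth_arc ik by blast
    have "left_face g r (p @ take j r) (r ! j) = vtx g r p"
      using lf_nth[of j "p @ take j r"] ik vtx_cancel_right[OF p take_L] by simp
    moreover have "left_face g r ((p @ take j r) @ [r ! j]) (- (r ! j)) = vtx g r (p @ c)"
      unfolding rl[symmetric] using lf_nth[of l] ik
      by (simp add: c_def take_Suc_conv_app_nth)
    ultimately show ?thesis using bd[OF w a] by simp
  qed
  have astep: "\<alpha> (vtx g r (p @ c)) = \<alpha> (vtx g r p) + 1" if p: "p \<in> lists (arcs g)" for p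
  proof -
    have "sum_list (map (cob r i k) c) = 1"
      unfolding c_def using inv_sum[of "cob r i k", OF omega_neg] Omega[of "Suc j"] Omega[of l] ij jk kl ll
      by simp
    then show ?thesis using alpha_walk[OF p cL] by simp
  qed
  show "F1 v = F2 v"
  proof (cases "v \<in> cover_vertices g r")
    case False then show ?thesis using assms unfolding fills_def by auto
  next
    case True
    then obtain h where h: "h \<in> lists (arcs g)" "v = vtx g r h" unfolding cover_vertices_def by blast
    show ?thesis
    proof (rule ccontr)
      assume ne: "F1 v \<noteq> F2 v"
      define ch where "ch n = ((\<lambda>p. p @ c) ^^ n) h" for n
      have chS: "ch (Suc n) = ch n @ c" for n unfolding ch_def by simp
      have ch0: "ch 0 = h" unfolding ch_def by simp
      have chL: "ch n \<in> lists (arcs g)" for n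
        by (induction n) (simp add: ch0 h, simp add: chS cL)
      have chG: "G (vtx g r (ch n)) = G v" for n
      proof (induction n)
        case 0 then show ?case by (simp add: ch0 h)
      next
        case (Suc n)
        have "G (vtx g r (ch (Suc n))) = G (vtx g r (ch n))" unfolding chS by (rule Gstep[OF chL])
        then show ?case using Suc.IH by simp
      qed
      have chA: "\<alpha> (vtx g r (ch n)) = \<alpha> v + real n" for n
      proof (induction n)
        case 0 then show ?case by (simp add: ch0 h)
      next
        case (Suc n)
        have "\<alpha> (vtx g r (ch (Suc n))) = \<alpha> (vtx g r (ch n)) + 1" unfolding chS by (rule astep[OF chL])
        then show ?case using Suc.IH by simp
      qed
      have inj: "inj (\<lambda>n. vtx g r (ch n))"
      proof (rule injI)
        fix m n assume "vtx g r (ch m) = vtx g r (ch n)"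
        then have "\<alpha> (vtx g r (ch m)) = \<alpha> (vtx g r (ch n))" by (rule arg_cong)
        then have "real m = real n" using chA[of m] chA[of n] by linarith
        then show "m = n" by simp
      qed
      have "range (\<lambda>n. vtx g r (ch n)) \<subseteq> {v. F1 v \<noteq> 0} \<union> {v. F2 v \<noteq> 0}"
      proof
        fix x assume "x \<in> range (\<lambda>n. vtx g r (ch n))"
        then obtain n where x: "x = vtx g r (ch n)" by blast
        have "F1 x - F2 x = F1 v - F2 v" using chG[of n] unfolding G_def x .
        then show "x \<in> {v. F1 v \<noteq> 0} \<union> {v. F2 v \<noteq> 0}" using ne by auto
      qed
      moreover have "finite ({v. F1 v \<noteq> 0} \<union> {v. F2 v \<noteq> 0})" using assms unfolding fills_def by auto
      ultimately have "finite (range (\<lambda>n. vtx g r (ch n)))" using finite_subset by blast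
      then show False using finite_imageD[OF _ inj] by simp
    qed
  qed
qed

lemma Sw_rhs: "Sw (phiA g r \<alpha> (cob r j l)) w0 es =
    (\<Sum>m < length es. (\<alpha> (vtx g r (w0 @ take m es)) + \<alpha> (vtx g r (w0 @ take (Suc m) es))) / 2
                      * cob r j l (es ! m))"
  unfolding Sw_sum phiA_def by (rule sum.cong) (auto simp: take_Suc_conv_app_nth)

end

theorem proposition5p4:
  fixes g :: nat and r :: "int list" and i j k l :: nat
    and \<alpha> :: "int list set \<Rightarrow> real" and w0 es :: "int list"
  assumes "g \<ge> 2"
    and "one_vertex_one_face g r"
    and "i < j" and "j < k" and "k < l" and "l < 4 * g"
    and "r ! k = - (r ! i)" and "r ! l = - (r ! j)"
    and "derives_from g r (cob r i k) \<alpha>"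
    and "closed_walk g r w0 es"
  shows "area g r w0 es =
    (\<Sum>m < length es. (\<alpha> (vtx g r (w0 @ take m es)) + \<alpha> (vtx g r (w0 @ take (Suc m) es))) / 2
                      * cob r j l (es ! m))"
proof -
  interpret C: Ctx g r i j k l \<alpha>
    using assms unfolding one_vertex_one_face_def by unfold_locales auto
  have cw: "w0 \<in> lists (arcs g)" "es \<in> lists (arcs g)" "vtx g r (w0 @ es) = vtx g r w0"
    using assms(10) unfolding closed_walk_def by auto
  obtain F where F: "C.good w0 es [] F"
    using C.good_exists[OF closed_trivial[OF cw] cw(1)] by blast
  have fF: "fills g r w0 es F"
    using F unfolding C.good_def fills_def trav_trc by simp
  have sF: "(\<Sum>v\<in>{v. F v \<noteq> 0}. real_of_int (F v)) = Sw (phiA g r \<alpha> (cob r j l)) w0 es"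
    using F unfolding C.good_def by simp
  have "area g r w0 es = (\<Sum>v\<in>{v. F v \<noteq> 0}. real_of_int (F v))"
    unfolding area_def
  proof (rule the_equality)
    show "\<exists>F'. fills g r w0 es F' \<and> (\<Sum>v\<in>{v. F v \<noteq> 0}. real_of_int (F v)) = (\<Sum>v\<in>{v. F' v \<noteq> 0}. real_of_int (F' v))"
      using fF by blast
  next
    fix x assume "\<exists>F'. fills g r w0 es F' \<and> x = (\<Sum>v\<in>{v. F' v \<noteq> 0}. real_of_int (F' v))"
    then show "x = (\<Sum>v\<in>{v. F v \<noteq> 0}. real_of_int (F v))"
      using C.fills_unique[OF _ fF] by blast
  qed
  then show ?thesis using sF C.Sw_rhs by simp
qed

end
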